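(* Let $D$ be a checkerboard colorable virtual link diagram and let $G_D$ be a signed Tait graph of $D$. Then $\langle D\rangle(A,B,d)=F[G_D](A,B,d)$.
   Context: A virtual link diagram is a plane curve with real crossings and virtual crossings. It is checkerboard colorable if one can color a small neighbourhood of one side of each arc so that near each real crossing the colored sides alternate, and near each virtual crossing the colorings of the two strands pass through independently. Bracket polynomial: $\langle D\rangle(A,B,d)=\sum_{\sigma}A^{\alpha(\sigma)}B^{\beta(\sigma)}d^{|\sigma|-1}$, the sum over all states $\sigma$ (choice of $A$- or $B$-smoothing at every real crossing), $\alpha(\sigma),\beta(\sigma)$ the numbers of $A$- and $B$-smoothings, $|\sigma|$ the number of closed curves. Signed Tait graph (Chmutov–Pak): given a checkerboard coloring of $D$, thicken $D$ to a surface in which bands at virtual crossings pass without touching; the colored neighbourhoods form annuli whose exterior circles run along the diagram, jumping between strands at real crossings so that the two colored corners of each crossing lie on them. Replace each real crossing by an edge-ribbon joining the exterior-circle arcs at the two colored corners and glue discs along the interior circles. The result is an orientable signed ribbon graph (vertices = capped annuli, edges = real crossings, edge sign $+$ iff the $A$-smoothing of the crossing joins the two colored corners), i.e. a signed cyclic graph $G_D$ (cyclic graph: graph with cyclic ordering of half-edges at each vertex). The polynomial $F[G]$ of a signed cyclic graph $G$: edges may be "marked"; for an unmarked edge $e$, $G-e$ deletes $e$ and $G(\bar e)$ keeps $e$ and marks it; $F[G]=B\,F[G-e]+A\,F[G(\bar e)]$ if $e$ is positive, $F[G]=A\,F[G-e]+B\,F[G(\bar e)]$ if $e$ is negative; and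 if $H$ is a spanning subgraph (all vertices, a subset of edges with induced cyclic order) all of whose edges are marked, $F[H]=d^{bc(H)-1}$, with $bc(H)$ the number of boundary components of the ribbon graph of $H$. *)

theory Defs
  imports Main
begin

text \<open>A virtual link diagram, up to detour moves (which do not affect the bracket nor the
Tait graph construction), is recorded by: its finite set of real crossings; at each real
crossing c four ends (c,0),(c,1),(c,2),(c,3), numbered counterclockwise in the plane, the
ends 0 and 2 belonging to the over-strand and 1 and 3 to the under-strand; the arcs of the
diagram, given by the fixed-point-free involution lnk on ends (lnk x is the other end of the
arc starting at x; virtual crossings are just where arcs pass over each other);
and the number of closed components without real crossings.\<close>

record 'c vdiag =
  cross :: "'c set"
  lnk :: "'c \<times> nat \<Rightarrow> 'c \<times> nat"
  nloops :: nat

definition ends :: "'c vdiag \<Rightarrow> ('c \<times> nat) set" where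
  "ends D = cross D \<times> {0..<4}"

definition virtual_link_diagram :: "'c vdiag \<Rightarrow> bool" where
  "virtual_link_diagram D \<longleftrightarrow> finite (cross D) \<and>
     (\<forall>x\<in>ends D. lnk D x \<in> ends D \<and> lnk D (lnk D x) = x \<and> lnk D x \<noteq> x)"

text \<open>A state is given by the set S of A-smoothed crossings.  The A-smoothing joins the
A-regions (corners 0 and 2, i.e. the corners swept by the over-strand rotating
counterclockwise), so it pairs the ends (0,3) and (1,2); the B-smoothing pairs (0,1),(2,3).\<close>

definition smooth :: "'c set \<Rightarrow> 'c \<times> nat \<Rightarrow> 'c \<times> nat" where
  "smooth S = (\<lambda>(c, i). if c \<in> S then (c, 3 - i) else (c, if even i then i + 1 else i - 1))"

text \<open>Closed curves of a state: connected components of the ends under the arcs and the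
smoothing arcs, plus the crossingless components.\<close>
definition state_circles :: "'c vdiag \<Rightarrow> 'c set \<Rightarrow> nat" where
  "state_circles D S =
     card (ends D // (({(x, lnk D x) | x. x \<in> ends D} \<union> {(x, smooth S x) | x. x \<in> ends D})\<^sup>*))
     + nloops D"

definition bracket :: "'c vdiag \<Rightarrow> 'a::field \<Rightarrow> 'a \<Rightarrow> 'a \<Rightarrow> 'a" where
  "bracket D A B d = (\<Sum>S\<in>Pow (cross D).
      A ^ card S * B ^ card (cross D - S) * d powi (int (state_circles D S) - 1))"

text \<open>Vertices, half-edges with their vertex, the rotation (cyclic successor of a
half-edge at its vertex), the edge involution and the sign of (the edge of) a half-edge.\<close>
record ('v, 'h) scg =
  sverts :: "'v set"
  shalfs :: "'h set"
  svert :: "'h \<Rightarrow> 'v"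
  srot :: "'h \<Rightarrow> 'h"
  sopp :: "'h \<Rightarrow> 'h"
  ssign :: "'h \<Rightarrow> bool"

definition orbit :: "('h \<Rightarrow> 'h) \<Rightarrow> 'h \<Rightarrow> 'h set" where
  "orbit f x = {(f ^^ n) x | n. True}"

text \<open>Induced cyclic order on a subset K of the half-edges.\<close>
definition induced_rot :: "('h \<Rightarrow> 'h) \<Rightarrow> 'h set \<Rightarrow> 'h \<Rightarrow> 'h" where
  "induced_rot f K h = (f ^^ (LEAST n. 0 < n \<and> (f ^^ n) h \<in> K)) h"

definition delete_edge :: "('v, 'h) scg \<Rightarrow> 'h \<Rightarrow> ('v, 'h) scg" where
  "delete_edge G h = G\<lparr> shalfs := shalfs G - {h, sopp G h},
                       srot := induced_rot (srot G) (shalfs G - {h, sopp G h}) \<rparr>"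

text \<open>Number of boundary components of the ribbon graph: orbits of rotation after edge
involution (face permutation), plus one for each vertex carrying no half-edge.\<close>
definition bc :: "('v, 'h) scg \<Rightarrow> nat" where
  "bc G = card (orbit (srot G \<circ> sopp G) ` shalfs G)
          + card {v \<in> sverts G. \<forall>h\<in>shalfs G. svert G h \<noteq> v}"

text \<open>F with a set M of marked half-edges (an edge is marked when its half-edges are);
the unmarked edge to expand is chosen arbitrarily.\<close>
function Fm :: "'a::field \<Rightarrow> 'a \<Rightarrow> 'a \<Rightarrow> ('v, 'h) scg \<Rightarrow> 'h set \<Rightarrow> 'a" where
  "Fm A B d G M =
    (if \<not> finite (shalfs G) \<or> shalfs G \<subseteq> M then d powi (int (bc G) - 1)
     else (let h = (SOME h. h \<in> shalfs G - M); e = {h, sopp G h} in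
       if ssign G h then B * Fm A B d (delete_edge G h) M + A * Fm A B d G (M \<union> e)
       else A * Fm A B d (delete_edge G h) M + B * Fm A B d G (M \<union> e)))"
  by pat_completeness auto
termination
proof (relation "measure (\<lambda>(A, B, d, G, M). card (shalfs G - M))", goal_cases)
  case 1 then show ?case by simp
next
  case (2 A B d G M h e)
  then have "h \<in> shalfs G - M" by (metis Diff_eq_empty_iff some_in_eq)
  with 2 show ?case
    by (auto simp: delete_edge_def intro!: psubset_card_mono)
next
  case (3 A B d G M h e)
  then have "h \<in> shalfs G - M" by (metis Diff_eq_empty_iff some_in_eq)
  with 3 show ?case by (auto intro!: psubset_card_mono)
next
  case (4 A B d G M h e)
  then have "h \<in> shalfs G - M" by (metis Diff_eq_empty_iff some_in_eq)
  with 4 show ?case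
    by (auto simp: delete_edge_def intro!: psubset_card_mono)
next
  case (5 A B d G M h e)
  then have "h \<in> shalfs G - M" by (metis Diff_eq_empty_iff some_in_eq)
  with 5 show ?case by (auto intro!: psubset_card_mono)
qed

definition F :: "'a::field \<Rightarrow> 'a \<Rightarrow> 'a \<Rightarrow> ('v, 'h) scg \<Rightarrow> 'a" where
  "F A B d G = Fm A B d G {}"

text \<open>Corner (c,k) is the corner between ends k and (k+1) mod 4 at crossing c.  A colouring
(alternating at each real crossing) is determined by col c: the colored corners at c are
0 and 2 if col c, and 1 and 3 otherwise.\<close>
definition colored :: "('c \<Rightarrow> bool) \<Rightarrow> 'c \<times> nat \<Rightarrow> bool" where
  "colored col = (\<lambda>(c, k). (even k \<longleftrightarrow> col c))"

text \<open>Leaving crossing c outward along end i, corner i lies on the left; arriving at the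
other end (c',j) of the arc, the left side is corner (j+3) mod 4.  Each arc has exactly one
side colored, consistently along the arc (crossingless components can always be colored).\<close>
definition checkerboard :: "'c vdiag \<Rightarrow> ('c \<Rightarrow> bool) \<Rightarrow> bool" where
  "checkerboard D col \<longleftrightarrow>
     (\<forall>x\<in>ends D. colored col x = colored col (fst (lnk D x), (snd (lnk D x) + 3) mod 4))"

definition checkerboard_colorable :: "'c vdiag \<Rightarrow> bool" where
  "checkerboard_colorable D \<longleftrightarrow> (\<exists>col. checkerboard D col)"

text \<open>Traversing an exterior circle of the colored annuli with the colored side on the left:
from colored corner (c,k) leave c along end k, follow the arc to (c',j) and go round the
colored corner (c', (j+3) mod 4).\<close>
definition tait_next :: "'c vdiag \<Rightarrow> 'c \<times> nat \<Rightarrow> 'c \<times> nat" where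
  "tait_next D x = (fst (lnk D x), (snd (lnk D x) + 3) mod 4)"

definition tait_halfs :: "'c vdiag \<Rightarrow> ('c \<Rightarrow> bool) \<Rightarrow> ('c \<times> nat) set" where
  "tait_halfs D col = {x \<in> ends D. colored col x}"

definition A_corners :: "nat set" where
  "A_corners = {0, 2}"

text \<open>Signed Tait graph: vertices are the capped annuli (exterior circles passing real
crossings, plus one for each crossingless component); half-edges are the colored corners;
the cyclic order at a vertex is the order of the colored corners along its exterior circle
(in the orientation inherited from the plane); the edge at crossing c joins its two colored
corners, and is positive iff the A-smoothing joins the two colored corners.\<close>
definition tait_graph :: "'c vdiag \<Rightarrow> ('c \<Rightarrow> bool) \<Rightarrow> (('c \<times> nat) set + nat, 'c \<times> nat) scg" where
  "tait_graph D col =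
    \<lparr> sverts = Inl ` (orbit (tait_next D) ` tait_halfs D col) \<union> Inr ` {..<nloops D},
      shalfs = tait_halfs D col,
      svert = (\<lambda>h. Inl (orbit (tait_next D) h)),
      srot = tait_next D,
      sopp = (\<lambda>(c, k). (c, (k + 2) mod 4)),
      ssign = (\<lambda>(c, k). \<forall>j\<in>A_corners. colored col (c, j)) \<rparr>"

end

theory Submission
  imports Defs
begin

lemma orbit_self: "x \<in> orbit f x"
  unfolding orbit_def by (auto intro: exI[of _ 0])

lemma orbit_iff: "y \<in> orbit f x \<longleftrightarrow> (\<exists>n. y = (f^^n) x)"
  unfolding orbit_def by auto
lemma in_orbit1: "g x \<in> orbit g x"
proof -
  have "g x = (g^^1) x" by simp
  then show ?thesis unfolding orbit_iff by (rule exI)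
qed

lemma funpow_in: "\<forall>y\<in>S. g y \<in> S \<Longrightarrow> x \<in> S \<Longrightarrow> (g^^n) x \<in> S"
  by (induction n) auto

lemma orbit_subset: "\<forall>y\<in>S. g y \<in> S \<Longrightarrow> x \<in> S \<Longrightarrow> orbit g x \<subseteq> S"
  unfolding orbit_def using funpow_in[of S g x] by auto

lemma funpow_cong_on:
  assumes "\<forall>y\<in>S. g y \<in> S" "\<forall>y\<in>S. g y = g' y" "x \<in> S"
  shows "(g^^n) x = (g'^^n) x"
proof (induction n)
  case (Suc n)
  have "(g^^n) x \<in> S" using funpow_in[OF assms(1,3)] by blast
  then show ?case using Suc assms by simp
qed simp

lemma orbit_cong:
  assumes "\<forall>y\<in>S. g y \<in> S" "\<forall>y\<in>S. g y = g' y" "x \<in> S"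
  shows "orbit g x = orbit g' x"
  using funpow_cong_on[OF assms] unfolding orbit_def by simp

lemma orbit_trans: "y \<in> orbit g x \<Longrightarrow> orbit g y \<subseteq> orbit g x"
proof
  fix z assume "y \<in> orbit g x" "z \<in> orbit g y"
  then obtain m n where "y = (g^^m) x" "z = (g^^n) y" unfolding orbit_def by auto
  then have "z = (g^^(n+m)) x" by (simp add: funpow_add)
  then show "z \<in> orbit g x" unfolding orbit_def by auto
qed

lemma funpow_inj_on:
  assumes "\<forall>y\<in>S. g y \<in> S" "inj_on g S"
  shows "\<forall>a\<in>S. \<forall>b\<in>S. (g^^i) a = (g^^i) b \<longrightarrow> a = b"
proof (induction i)
  case (Suc i)
  show ?case
  proof (intro ballI impI)
    fix a b assume ab: "a \<in> S" "b \<in> S" "(g^^Suc i) a = (g^^Suc i) b"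
    have "(g^^i) a \<in> S" "(g^^i) b \<in> S" using funpow_in[OF assms(1) ab(1)] funpow_in[OF assms(1) ab(2)] by blast+
    then have "(g^^i) a = (g^^i) b" using ab(3) assms(2) by (simp add: inj_on_def)
    then show "a = b" using Suc ab by blast
  qed
qed simp

lemma period:
  assumes "finite S" "\<forall>y\<in>S. g y \<in> S" "inj_on g S" "x \<in> S"
  shows "\<exists>n>0. (g^^n) x = x"
proof -
  let ?h = "\<lambda>n. (g^^n) x"
  have sub: "?h ` {0..card S} \<subseteq> S" using funpow_in[OF assms(2,4)] by blast
  have "\<not> inj_on ?h {0..card S}"
  proof
    assume "inj_on ?h {0..card S}"
    then have "card (?h ` {0..card S}) = card {0..card S}" by (rule card_image)
    then have "card (?h ` {0..card S}) = card S + 1" by simp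
    moreover have "card (?h ` {0..card S}) \<le> card S" using card_mono[OF assms(1) sub] .
    ultimately show False by simp
  qed
  then obtain i j where ij: "i \<noteq> j" "?h i = ?h j" unfolding inj_on_def by blast
  have gen: "\<exists>n>0. (g^^n) x = x" if "i < j" "?h i = ?h j" for i j
  proof -
    have "(g^^i) ((g^^(j-i)) x) = (g^^i) x"
    proof -
      have "(g^^j) x = (g^^(i + (j-i))) x" using that(1) by simp
      also have "\<dots> = (g^^i) ((g^^(j-i)) x)" by (simp add: funpow_add)
      finally have "(g^^j) x = (g^^i) ((g^^(j-i)) x)" .
      then show ?thesis using that(2) by simp
    qed
    moreover have "(g^^(j-i)) x \<in> S" using funpow_in[OF assms(2,4)] by blast
    ultimately have "(g^^(j-i)) x = x" using funpow_inj_on[OF assms(2,3), of i] assms(4) by blast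
    then show ?thesis using that by (intro exI[of _ "j-i"]) auto
  qed
  show ?thesis
  proof (cases "i < j")
    case True then show ?thesis using gen ij by blast
  next
    case False then have "j < i" using ij by simp
    then show ?thesis using gen[of j i] ij by simp
  qed
qed

lemma period_mult:
  assumes "(g^^p) x = x" shows "(g^^(p*k)) x = x"
proof (induction k)
  case (Suc k)
  have "g^^(p * Suc k) = g^^p \<circ> g^^(p*k)" by (simp add: funpow_add)
  then show ?case using Suc assms by simp
qed simp

lemma orbit_sym:
  assumes "finite S" "\<forall>y\<in>S. g y \<in> S" "inj_on g S" "x \<in> S" "y \<in> orbit g x"
  shows "x \<in> orbit g y"
proof -
  obtain p where p: "p > 0" "(g^^p) x = x" using period[OF assms(1-4)] by blast
  obtain m where m: "y = (g^^m) x" using assms(5) unfolding orbit_def by auto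
  have pm: "(g^^(p*m)) x = x" using period_mult[OF p(2)] .
  have "p*m \<ge> m" using p(1) by simp
  then have "(g^^(p*m)) x = (g^^(p*m - m)) y"
  proof -
    have "(g^^(p*m)) x = (g^^((p*m - m) + m)) x" using \<open>p*m \<ge> m\<close> by simp
    also have "\<dots> = (g^^(p*m - m)) ((g^^m) x)" by (simp add: funpow_add)
    finally have "(g^^(p*m)) x = (g^^(p*m - m)) ((g^^m) x)" .
    then show ?thesis using m by simp
  qed
  then have "x = (g^^(p*m - m)) y" using pm by simp
  then show ?thesis unfolding orbit_def by blast
qed

lemma orbit_eq:
  assumes "finite S" "\<forall>y\<in>S. g y \<in> S" "inj_on g S" "x \<in> S" "y \<in> orbit g x"
  shows "orbit g y = orbit g x"
proof
  show "orbit g y \<subseteq> orbit g x" by (rule orbit_trans[OF assms(5)])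
  show "orbit g x \<subseteq> orbit g y" by (rule orbit_trans[OF orbit_sym[OF assms]])
qed

locale fr =
  fixes H K :: "'h set" and f sw sg :: "'h \<Rightarrow> 'h"
  assumes finH: "finite H" and fH: "\<forall>y\<in>H. f y \<in> H" and injf: "inj_on f H"
    and KH: "K \<subseteq> H" and swK: "\<forall>k\<in>K. sw k \<in> K" and swsw: "\<forall>k\<in>K. sw (sw k) = k"
    and sgdef: "\<forall>x\<in>H. sg x = (if f x \<in> K then sw (f x) else f x)"
begin

definition ret :: "'h \<Rightarrow> nat" where
  "ret h = (LEAST n. 0 < n \<and> (f^^n) h \<in> K)"

definition r :: "'h \<Rightarrow> 'h" where
  "r h = sw (induced_rot f K h)"

lemma ex_ret: assumes "h \<in> K" shows "\<exists>n. 0 < n \<and> (f^^n) h \<in> K"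
proof -
  have hH: "h \<in> H" using assms KH by blast
  obtain n where "n > 0" "(f^^n) h = h" using period[OF finH fH injf hH] by blast
  then have "0 < n \<and> (f^^n) h \<in> K" using assms by simp
  then show ?thesis by (rule exI)
qed

lemma ret_pos: "h \<in> K \<Longrightarrow> 0 < ret h"
  unfolding ret_def by (rule conjunct1[OF LeastI_ex[OF ex_ret]])

lemma ret_in: "h \<in> K \<Longrightarrow> (f^^ret h) h \<in> K"
  unfolding ret_def by (rule conjunct2[OF LeastI_ex[OF ex_ret]])

lemma ret_min: "h \<in> K \<Longrightarrow> 0 < j \<Longrightarrow> j < ret h \<Longrightarrow> (f^^j) h \<notin> K"
  unfolding ret_def using not_less_Least[of j "\<lambda>n. 0 < n \<and> (f^^n) h \<in> K"] by blast

lemma rho_ret: "induced_rot f K h = (f^^ret h) h"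
  unfolding induced_rot_def ret_def by simp

lemma rho_K: "h \<in> K \<Longrightarrow> induced_rot f K h \<in> K"
  using rho_ret ret_in by simp

lemma r_K: "h \<in> K \<Longrightarrow> r h \<in> K"
  unfolding r_def using rho_K swK by blast

lemma sgH: "\<forall>x\<in>H. sg x \<in> H"
  using sgdef fH swK KH by auto

lemma inj_sg: "inj_on sg H"
proof (rule inj_onI)
  fix x y assume xy: "x \<in> H" "y \<in> H" "sg x = sg y"
  have fxy: "f x = f y"
  proof (cases "f x \<in> K"; cases "f y \<in> K")
    assume "f x \<in> K" "f y \<in> K"
    then have "sw (f x) = sw (f y)" using xy sgdef by simp
    then have "sw (sw (f x)) = sw (sw (f y))" by simp
    then show ?thesis using swsw \<open>f x \<in> K\<close> \<open>f y \<in> K\<close> by simp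
  next
    assume "f x \<in> K" "f y \<notin> K"
    then have "sw (f x) = f y" using xy sgdef by simp
    moreover have "sw (f x) \<in> K" using swK \<open>f x \<in> K\<close> by blast
    ultimately show ?thesis using \<open>f y \<notin> K\<close> by simp
  next
    assume "f x \<notin> K" "f y \<in> K"
    then have "f x = sw (f y)" using xy sgdef by simp
    moreover have "sw (f y) \<in> K" using swK \<open>f y \<in> K\<close> by blast
    ultimately show ?thesis using \<open>f x \<notin> K\<close> by simp
  next
    assume "f x \<notin> K" "f y \<notin> K"
    then show ?thesis using xy sgdef by simp
  qed
  then show "x = y" using injf xy by (simp add: inj_on_def)
qed

lemma sg_pow_lt: "h \<in> K \<Longrightarrow> 0 < j \<Longrightarrow> j < ret h \<Longrightarrow> (sg^^j) h = (f^^j) h"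
proof (induction j)
  case 0 then show ?case by simp
next
  case (Suc j)
  have hH: "h \<in> H" using Suc KH by blast
  have fjH: "(f^^j) h \<in> H" using funpow_in[OF fH hH] .
  have nK: "(f^^Suc j) h \<notin> K" using ret_min Suc by blast
  show ?case
  proof (cases "j = 0")
    case True
    then show ?thesis using nK sgdef hH by simp
  next
    case False
    then have "(sg^^j) h = (f^^j) h" using Suc by simp
    then show ?thesis using nK sgdef fjH by simp
  qed
qed

lemma sg_pow_ret: assumes "h \<in> K" shows "(sg^^ret h) h = r h"
proof -
  obtain k where k: "ret h = Suc k" using ret_pos[OF assms] gr0_implies_Suc by blast
  have hH: "h \<in> H" using assms KH by blast
  have a: "(sg^^k) h = (f^^k) h"
    using sg_pow_lt[OF assms, of k] k by (cases "k = 0") auto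
  have fkH: "(f^^k) h \<in> H" using funpow_in[OF fH hH] .
  have inK: "f ((f^^k) h) \<in> K" using ret_in[OF assms] k by simp
  have "(sg^^ret h) h = sg ((f^^k) h)" using k a by simp
  also have "\<dots> = sw (f ((f^^k) h))" using sgdef fkH inK by simp
  also have "\<dots> = r h" unfolding r_def rho_ret k by simp
  finally show ?thesis .
qed

lemma r_in_orbit: assumes "h \<in> K" shows "r h \<in> orbit sg h"
proof -
  have "r h = (sg^^ret h) h" using sg_pow_ret assms by simp
  then show ?thesis unfolding orbit_iff by (rule exI)
qed

lemma orbit_r_sub: assumes "h \<in> K" shows "orbit r h \<subseteq> orbit sg h"
proof -
  have "(r^^n) h \<in> orbit sg h \<and> (r^^n) h \<in> K" for n
  proof (induction n)
    case 0 then show ?case using assms orbit_self by simp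
  next
    case (Suc n)
    then have a: "r ((r^^n) h) \<in> orbit sg ((r^^n) h)" using r_in_orbit by blast
    have "orbit sg ((r^^n) h) \<subseteq> orbit sg h" using Suc by (intro orbit_trans) simp
    then have "r ((r^^n) h) \<in> orbit sg h" using a by (rule subsetD)
    then show ?case using Suc r_K by simp
  qed
  note A = this
  show ?thesis
  proof
    fix y assume "y \<in> orbit r h"
    then obtain n where "y = (r^^n) h" unfolding orbit_iff by blast
    then show "y \<in> orbit sg h" using A by simp
  qed
qed

lemma sg_pow_K: "h \<in> K \<Longrightarrow> (sg^^n) h \<in> K \<Longrightarrow> (sg^^n) h \<in> orbit r h"
proof (induction n arbitrary: h rule: less_induct)
  case (less n)
  show ?case
  proof (cases "n = 0")
    case True then show ?thesis using orbit_self by simp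
  next
    case False
    have le: "ret h \<le> n"
    proof (rule ccontr)
      assume "\<not> ret h \<le> n"
      then have nl: "n < ret h" by simp
      have "(sg^^n) h = (f^^n) h" using sg_pow_lt[OF less.prems(1) _ nl] False by simp
      moreover have "(f^^n) h \<notin> K" using ret_min[OF less.prems(1) _ nl] False by simp
      ultimately show False using less.prems(2) by simp
    qed
    have "(sg^^n) h = (sg^^((n - ret h) + ret h)) h" using le by simp
    also have "\<dots> = (sg^^(n - ret h)) ((sg^^ret h) h)" by (simp add: funpow_add)
    also have "\<dots> = (sg^^(n - ret h)) (r h)" using sg_pow_ret[OF less.prems(1)] by simp
    finally have eq: "(sg^^n) h = (sg^^(n - ret h)) (r h)" .
    have lt: "n - ret h < n" using ret_pos[OF less.prems(1)] False by simp
    have rK: "r h \<in> K" using r_K[OF less.prems(1)] .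
    have inK: "(sg^^(n - ret h)) (r h) \<in> K" using less.prems(2) eq by simp
    have "(sg^^(n - ret h)) (r h) \<in> orbit r (r h)"
      using less.IH[OF lt rK inK] .
    moreover have "orbit r (r h) \<subseteq> orbit r h"
      by (rule orbit_trans[OF in_orbit1])
    ultimately show ?thesis using eq by (simp add: subset_iff)
  qed
qed

lemma orbit_sg_K: assumes "h \<in> K" shows "orbit sg h \<inter> K = orbit r h"
proof
  show "orbit sg h \<inter> K \<subseteq> orbit r h"
  proof
    fix y assume "y \<in> orbit sg h \<inter> K"
    then have y1: "y \<in> orbit sg h" and y2: "y \<in> K" by auto
    from y1 obtain n where "y = (sg^^n) h" unfolding orbit_iff by blast
    note this y2
    then show "y \<in> orbit r h" using sg_pow_K assms by blast
  qed
next
  have "orbit r h \<subseteq> K" using orbit_subset[of K r h] r_K assms by blast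
  then show "orbit r h \<subseteq> orbit sg h \<inter> K" using orbit_r_sub assms by blast
qed

lemma avoid1: assumes "x \<in> H" "orbit sg x \<inter> K = {}" shows "orbit sg x = orbit f x"
proof -
  have "(sg^^n) x = (f^^n) x" for n
  proof (induction n)
    case (Suc n)
    have inH: "(f^^n) x \<in> H" using funpow_in[OF fH assms(1)] .
    have "(sg^^Suc n) x \<in> orbit sg x" unfolding orbit_iff by blast
    then have nK: "(sg^^Suc n) x \<notin> K" using assms(2) by blast
    have "(sg^^Suc n) x = sg ((f^^n) x)" using Suc by simp
    then show ?case using nK sgdef inH swK by (auto split: if_splits)
  qed simp
  then show ?thesis unfolding orbit_def by simp
qed

lemma avoid2: assumes "x \<in> H" "orbit f x \<inter> K = {}" shows "orbit sg x = orbit f x"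
proof -
  have "(sg^^n) x = (f^^n) x" for n
  proof (induction n)
    case (Suc n)
    have inH: "(f^^n) x \<in> H" using funpow_in[OF fH assms(1)] .
    have "(f^^Suc n) x \<in> orbit f x" unfolding orbit_iff by blast
    then have nK: "f ((f^^n) x) \<notin> K" using assms(2) by auto
    have "(sg^^Suc n) x = sg ((f^^n) x)" using Suc by simp
    then show ?case using nK sgdef inH by simp
  qed simp
  then show ?thesis unfolding orbit_def by simp
qed

lemma count_orbits:
  "card (orbit sg ` H) = card (orbit r ` K) + card {Q \<in> orbit f ` H. Q \<inter> K = {}}"
proof -
  let ?A1 = "{Q \<in> orbit sg ` H. Q \<inter> K \<noteq> {}}"
  let ?A2 = "{Q \<in> orbit sg ` H. Q \<inter> K = {}}"
  have fin: "finite (orbit sg ` H)" using finH by simp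
  have split: "orbit sg ` H = ?A1 \<union> ?A2" by blast
  have c1: "card (?A1 \<union> ?A2) = card ?A1 + card ?A2"
    by (rule card_Un_disjoint) (use fin in auto)
  have "card (orbit sg ` H) = card ?A1 + card ?A2"
    using arg_cong[OF split, of card] c1 by simp
  moreover have "?A2 = {Q \<in> orbit f ` H. Q \<inter> K = {}}"
  proof
    show "?A2 \<subseteq> {Q \<in> orbit f ` H. Q \<inter> K = {}}"
    proof
      fix Q assume "Q \<in> ?A2"
      then obtain x where x: "x \<in> H" "Q = orbit sg x" "Q \<inter> K = {}" by blast
      then have "Q = orbit f x" using avoid1 by simp
      then show "Q \<in> {Q \<in> orbit f ` H. Q \<inter> K = {}}" using x by blast
    qed
  next
    show "{Q \<in> orbit f ` H. Q \<inter> K = {}} \<subseteq> ?A2"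
    proof
      fix Q assume "Q \<in> {Q \<in> orbit f ` H. Q \<inter> K = {}}"
      then obtain x where x: "x \<in> H" "Q = orbit f x" "Q \<inter> K = {}" by blast
      then have "Q = orbit sg x" using avoid2 by simp
      then show "Q \<in> ?A2" using x by blast
    qed
  qed
  moreover have "bij_betw (\<lambda>Q. Q \<inter> K) ?A1 (orbit r ` K)"
  proof (rule bij_betw_imageI)
    have rep: "\<exists>h\<in>K. Q = orbit sg h" if QA: "Q \<in> ?A1" for Q
    proof -
      obtain x where x: "x \<in> H" "Q = orbit sg x" using QA by blast
      obtain h where h: "h \<in> Q" "h \<in> K" using QA by blast
      have "h \<in> orbit sg x" using h x by simp
      then have "orbit sg h = orbit sg x" by (rule orbit_eq[OF finH sgH inj_sg x(1)])
      then have "Q = orbit sg h" using x(2) by simp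
      then show ?thesis using h(2) by blast
    qed
    show "inj_on (\<lambda>Q. Q \<inter> K) ?A1"
    proof (rule inj_onI)
      fix Q1 Q2 assume Q: "Q1 \<in> ?A1" "Q2 \<in> ?A1" "Q1 \<inter> K = Q2 \<inter> K"
      obtain h1 where h1: "h1 \<in> K" "Q1 = orbit sg h1" using rep[OF Q(1)] by blast
      obtain h2 where h2: "h2 \<in> K" "Q2 = orbit sg h2" using rep[OF Q(2)] by blast
      have "h2 \<in> Q2 \<inter> K" using h2 orbit_self[of h2 sg] by simp
      then have "h2 \<in> Q1 \<inter> K" using Q(3) by simp
      then have h21: "h2 \<in> orbit sg h1" using h1(2) by simp
      have h1H: "h1 \<in> H" using h1 KH by blast
      have "orbit sg h2 = orbit sg h1" by (rule orbit_eq[OF finH sgH inj_sg h1H h21])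
      then show "Q1 = Q2" using h1 h2 by simp
    qed
    show "(\<lambda>Q. Q \<inter> K) ` ?A1 = orbit r ` K"
    proof
      show "(\<lambda>Q. Q \<inter> K) ` ?A1 \<subseteq> orbit r ` K"
      proof
        fix P assume "P \<in> (\<lambda>Q. Q \<inter> K) ` ?A1"
        then obtain Q where Q: "Q \<in> ?A1" "P = Q \<inter> K" by blast
        obtain h where h: "h \<in> K" "Q = orbit sg h" using rep[OF Q(1)] by blast
        have "P = orbit r h" using Q(2) h orbit_sg_K by simp
        then show "P \<in> orbit r ` K" using h(1) by blast
      qed
      show "orbit r ` K \<subseteq> (\<lambda>Q. Q \<inter> K) ` ?A1"
      proof
        fix P assume "P \<in> orbit r ` K"
        then obtain h where h: "h \<in> K" "P = orbit r h" by blast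
        have hH: "h \<in> H" using h KH by blast
        have "h \<in> orbit sg h \<inter> K" using h orbit_self[of h sg] by simp
        then have mem: "orbit sg h \<in> ?A1" using hH by blast
        have eqP: "P = (\<lambda>Q. Q \<inter> K) (orbit sg h)" using orbit_sg_K[OF h(1)] h(2) by simp
        show "P \<in> (\<lambda>Q. Q \<inter> K) ` ?A1" by (rule image_eqI[where f="\<lambda>Q. Q \<inter> K", OF eqP mem])
      qed
    qed
  qed
  then have "card ?A1 = card (orbit r ` K)" by (rule bij_betw_same_card)
  ultimately show ?thesis by simp
qed

end

lemma conj_orbits:
  assumes rK: "\<forall>k\<in>K. rho k \<in> K" and swK: "\<forall>k\<in>K. sw k \<in> K" and swsw: "\<forall>k\<in>K. sw (sw k) = k"
  shows "card (orbit (rho \<circ> sw) ` K) = card (orbit (sw \<circ> rho) ` K)"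
proof -
  have it: "((rho \<circ> sw)^^n) (sw x) = sw (((sw \<circ> rho)^^n) x)" if "x \<in> K" for x n
  proof (induction n)
    case (Suc n)
    have "((sw \<circ> rho)^^n) x \<in> K" using funpow_in[of K "sw \<circ> rho"] rK swK that by simp
    then show ?case using Suc swsw rK by (simp add: o_def)
  qed simp
  have orb: "orbit (rho \<circ> sw) (sw x) = sw ` orbit (sw \<circ> rho) x" if "x \<in> K" for x
    unfolding orbit_def using it[OF that] by auto
  have swKK: "sw ` K = K" using swK swsw by (metis image_eqI subsetI subset_antisym image_subsetI)
  have "orbit (rho \<circ> sw) ` K = orbit (rho \<circ> sw) ` (sw ` K)" using swKK by simp
  also have "\<dots> = (\<lambda>x. sw ` orbit (sw \<circ> rho) x) ` K" using orb by (simp add: image_image)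
  also have "\<dots> = (image sw) ` (orbit (sw \<circ> rho) ` K)" by (simp add: image_image)
  finally have eq: "orbit (rho \<circ> sw) ` K = (image sw) ` (orbit (sw \<circ> rho) ` K)" .
  have injsw: "inj_on sw K" using swsw by (metis inj_onI)
  have sub: "\<Union> (orbit (sw \<circ> rho) ` K) \<subseteq> K"
    using orbit_subset[of K "sw \<circ> rho"] rK swK by auto
  have "inj_on (image sw) (orbit (sw \<circ> rho) ` K)"
    by (rule inj_on_image) (rule inj_on_subset[OF injsw sub])
  then show ?thesis using eq card_image by metis
qed

lemma mod4_cases: "(j::nat) < 4 \<Longrightarrow> j = 0 \<or> j = 1 \<or> j = 2 \<or> j = 3"
  by auto

locale diag =
  fixes D :: "'c vdiag" and col :: "'c \<Rightarrow> bool"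
  assumes vld: "virtual_link_diagram D" and cb: "checkerboard D col"
begin

abbreviation H0 where "H0 \<equiv> tait_halfs D col"
abbreviation f where "f \<equiv> tait_next D"

definition sw :: "'c \<times> nat \<Rightarrow> 'c \<times> nat" where
  "sw = (\<lambda>(c, k). (c, (k + 2) mod 4))"

definition hs :: "'c set \<Rightarrow> ('c \<times> nat) set" where
  "hs C = {x \<in> H0. fst x \<in> C}"

definition TS :: "'c set \<Rightarrow> 'c set" where
  "TS S = {c \<in> cross D. col c = (c \<in> S)}"

definition sig :: "'c set \<Rightarrow> 'c \<times> nat \<Rightarrow> 'c \<times> nat" where
  "sig S x = smooth S (lnk D x)"

lemma ends_iff: "x \<in> ends D \<longleftrightarrow> fst x \<in> cross D \<and> snd x < 4"
  unfolding ends_def by (cases x) auto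

lemma lnk_ends: "x \<in> ends D \<Longrightarrow> lnk D x \<in> ends D"
  using vld unfolding virtual_link_diagram_def by blast

lemma lnk_lnk: "x \<in> ends D \<Longrightarrow> lnk D (lnk D x) = x"
  using vld unfolding virtual_link_diagram_def by blast

lemma fin_cross: "finite (cross D)"
  using vld unfolding virtual_link_diagram_def by blast

lemma fin_ends: "finite (ends D)"
  unfolding ends_def using fin_cross by simp

lemma H0_ends: "H0 \<subseteq> ends D"
  unfolding tait_halfs_def by blast

lemma fin_H0: "finite H0"
  using finite_subset[OF H0_ends fin_ends] .

lemma H0_iff: "x \<in> H0 \<longleftrightarrow> x \<in> ends D \<and> colored col x"
  unfolding tait_halfs_def by blast

lemma colored_iff: "colored col (c, k) \<longleftrightarrow> (even k \<longleftrightarrow> col c)"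
  unfolding colored_def by simp

lemma cb': "x \<in> ends D \<Longrightarrow> colored col x = colored col (f x)"
  using cb unfolding checkerboard_def tait_next_def by blast

lemma f_ends: assumes "x \<in> ends D" shows "f x \<in> ends D"
proof -
  have "lnk D x \<in> ends D" using lnk_ends assms .
  then show ?thesis unfolding tait_next_def ends_iff by simp
qed

lemma col_lnk: assumes "x \<in> ends D" shows "colored col (lnk D x) = (\<not> colored col x)"
proof -
  obtain c j where cj: "lnk D x = (c, j)" by (cases "lnk D x")
  have j: "j < 4" using lnk_ends[OF assms] cj ends_iff by fastforce
  have "colored col x = colored col (c, (j + 3) mod 4)"
    using cb'[OF assms] cj unfolding tait_next_def by simp
  moreover have "even ((j + 3) mod 4) = odd j" using mod4_cases[OF j] by auto
  ultimately show ?thesis using cj colored_iff by simp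
qed

lemma f_H0: "x \<in> H0 \<Longrightarrow> f x \<in> H0"
  using f_ends cb' H0_iff by blast

lemma fH0: "\<forall>y\<in>H0. f y \<in> H0"
  using f_H0 by blast

lemma inj_f: "inj_on f (ends D)"
proof (rule inj_onI)
  fix x y assume xy: "x \<in> ends D" "y \<in> ends D" "f x = f y"
  obtain c j where cj: "lnk D x = (c, j)" by (cases "lnk D x")
  obtain c' j' where cj': "lnk D y = (c', j')" by (cases "lnk D y")
  have j: "j < 4" using lnk_ends[OF xy(1)] cj ends_iff by fastforce
  have j': "j' < 4" using lnk_ends[OF xy(2)] cj' ends_iff by fastforce
  have "c = c'" "(j + 3) mod 4 = (j' + 3) mod 4"
    using xy(3) cj cj' unfolding tait_next_def by simp_all
  moreover have "j = j'" using \<open>(j + 3) mod 4 = (j' + 3) mod 4\<close> mod4_cases[OF j] mod4_cases[OF j'] by auto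
  ultimately have "lnk D x = lnk D y" using cj cj' by simp
  then show "x = y" using lnk_lnk xy by metis
qed

lemma inj_f0: "inj_on f H0"
  using inj_on_subset[OF inj_f H0_ends] .

lemma sw_H0: assumes "x \<in> H0" shows "sw x \<in> H0"
proof -
  obtain c k where ck: "x = (c, k)" by (cases x)
  have k: "k < 4" "c \<in> cross D" using assms ck H0_ends ends_iff by auto
  have "even ((k + 2) mod 4) = even k" using mod4_cases[OF k(1)] by auto
  then show ?thesis using assms ck k by (simp add: sw_def H0_iff ends_iff colored_iff)
qed

lemma sw_sw: assumes "x \<in> ends D" shows "sw (sw x) = x"
proof -
  obtain c k where ck: "x = (c, k)" by (cases x)
  have k: "k < 4" using assms ck ends_iff by auto
  show ?thesis using mod4_cases[OF k] ck unfolding sw_def by auto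
qed

lemma sw_fst: "fst (sw x) = fst x"
  unfolding sw_def by (cases x) simp

lemma hs_H0: "hs C \<subseteq> H0"
  unfolding hs_def by blast

lemma sw_hs: "\<forall>k\<in>hs C. sw k \<in> hs C"
  unfolding hs_def using sw_H0 sw_fst by simp

lemma swsw_hs: "\<forall>k\<in>hs C. sw (sw k) = k"
  using sw_sw hs_H0 H0_ends by blast

lemma smooth_smooth: assumes "x \<in> ends D" shows "smooth S (smooth S x) = x"
proof -
  obtain c k where ck: "x = (c, k)" by (cases x)
  have k: "k < 4" using assms ck ends_iff by auto
  show ?thesis using mod4_cases[OF k] ck unfolding smooth_def by auto
qed

lemma smooth_ends: assumes "x \<in> ends D" shows "smooth S x \<in> ends D"
proof -
  obtain c k where ck: "x = (c, k)" by (cases x)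
  have k: "k < 4" "c \<in> cross D" using assms ck ends_iff by auto
  show ?thesis using mod4_cases[OF k(1)] ck k unfolding smooth_def ends_iff by auto
qed

lemma sig_form: assumes "x \<in> H0"
  shows "sig S x = (if f x \<in> hs (TS S) then sw (f x) else f x)"
proof -
  have xe: "x \<in> ends D" using assms H0_ends by blast
  obtain c j where cj: "lnk D x = (c, j)" by (cases "lnk D x")
  have j: "j < 4" and c: "c \<in> cross D" using lnk_ends[OF xe] cj ends_iff by fastforce+
  have fx: "f x = (c, (j + 3) mod 4)" using cj unfolding tait_next_def by simp
  have fxH: "f x \<in> H0" using f_H0[OF assms] .
  then have par: "even ((j + 3) mod 4) = col c" using fx H0_iff colored_iff by simp
  have inK: "f x \<in> hs (TS S) \<longleftrightarrow> (col c = (c \<in> S))"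
    using fxH fx c unfolding hs_def TS_def by simp
  show ?thesis
    unfolding sig_def cj using inK fx par mod4_cases[OF j]
    by (cases "col c"; cases "c \<in> S") (auto simp: smooth_def sw_def)
qed

lemma fr_inst: "fr H0 (hs (TS S)) f sw (sig S)"
  by (unfold_locales) (use fin_H0 fH0 inj_f0 hs_H0 sw_hs swsw_hs sig_form in auto)

end

context diag begin

definition Rel :: "'c set \<Rightarrow> (('c \<times> nat) \<times> ('c \<times> nat)) set" where
  "Rel S = {(x, lnk D x) | x. x \<in> ends D} \<union> {(x, smooth S x) | x. x \<in> ends D}"

lemma state_circles_Rel: "state_circles D S = card (ends D // (Rel S)\<^sup>*) + nloops D"
  unfolding state_circles_def Rel_def by simp

lemma sig_H0: "\<forall>x\<in>H0. sig S x \<in> H0"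
  using fr.sgH[OF fr_inst] .

lemma inj_sig: "inj_on (sig S) H0"
  using fr.inj_sg[OF fr_inst] .

lemma Rel_lnk: "x \<in> ends D \<Longrightarrow> (x, lnk D x) \<in> Rel S"
  unfolding Rel_def by blast

lemma Rel_smooth: "x \<in> ends D \<Longrightarrow> (x, smooth S x) \<in> Rel S"
  unfolding Rel_def by blast

lemma Rel_cases:
  assumes "(a, b) \<in> Rel S"
  shows "a \<in> ends D \<and> (b = lnk D a \<or> b = smooth S a)"
  using assms unfolding Rel_def by blast

lemma sym_Rel: "sym (Rel S)"
proof (rule symI)
  fix a b assume ab: "(a, b) \<in> Rel S"
  then have a: "a \<in> ends D" and b: "b = lnk D a \<or> b = smooth S a" using Rel_cases by blast+
  show "(b, a) \<in> Rel S"
  proof (cases "b = lnk D a")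
    case True
    then have "b \<in> ends D" "lnk D b = a" using lnk_ends lnk_lnk a by auto
    then show ?thesis using Rel_lnk[of b S] by simp
  next
    case False
    then have "b = smooth S a" using b by simp
    then have "b \<in> ends D" "smooth S b = a" using smooth_ends smooth_smooth a by auto
    then show ?thesis using Rel_smooth[of b S] by simp
  qed
qed

lemma sym_R: "(a, b) \<in> (Rel S)\<^sup>* \<Longrightarrow> (b, a) \<in> (Rel S)\<^sup>*"
  using sym_rtrancl[OF sym_Rel] by (rule symD)

lemma class_eq: assumes "(a, b) \<in> (Rel S)\<^sup>*" shows "(Rel S)\<^sup>* `` {a} = (Rel S)\<^sup>* `` {b}"
proof
  show "(Rel S)\<^sup>* `` {a} \<subseteq> (Rel S)\<^sup>* `` {b}"
    using sym_R[OF assms] by (auto intro: rtrancl_trans)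
  show "(Rel S)\<^sup>* `` {b} \<subseteq> (Rel S)\<^sup>* `` {a}"
    using assms by (auto intro: rtrancl_trans)
qed

lemma orbit_in_class: assumes "x \<in> H0" shows "orbit (sig S) x \<subseteq> (Rel S)\<^sup>* `` {x}"
proof -
  have "(x, (sig S ^^ n) x) \<in> (Rel S)\<^sup>*" for n
  proof (induction n)
    case (Suc n)
    let ?y = "(sig S ^^ n) x"
    have yH: "?y \<in> H0" using funpow_in[OF sig_H0 assms] .
    then have ye: "?y \<in> ends D" using H0_ends by blast
    have "(?y, lnk D ?y) \<in> Rel S" using Rel_lnk[OF ye] .
    moreover have "(lnk D ?y, smooth S (lnk D ?y)) \<in> Rel S" using Rel_smooth[OF lnk_ends[OF ye]] .
    ultimately have "(x, smooth S (lnk D ?y)) \<in> (Rel S)\<^sup>*"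
      using Suc by (meson rtrancl_into_rtrancl)
    moreover have "sig S ?y = smooth S (lnk D ?y)" by (simp add: sig_def)
    ultimately show ?case by simp
  qed simp
  note A = this
  show ?thesis
  proof
    fix y assume "y \<in> orbit (sig S) x"
    then obtain n where "y = (sig S ^^ n) x" unfolding orbit_iff by blast
    then show "y \<in> (Rel S)\<^sup>* `` {x}" using A by simp
  qed
qed

lemma class_in_U: assumes xH: "x \<in> H0"
  shows "(Rel S)\<^sup>* `` {x} \<subseteq> orbit (sig S) x \<union> lnk D ` orbit (sig S) x"
proof
  let ?O = "orbit (sig S) x"
  have OH: "?O \<subseteq> H0" using orbit_subset[OF sig_H0 xH] .
  fix y assume "y \<in> (Rel S)\<^sup>* `` {x}"
  then have "(x, y) \<in> (Rel S)\<^sup>*" by simp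
  then show "y \<in> ?O \<union> lnk D ` ?O"
  proof (induction rule: rtrancl_induct)
    case base then show ?case by (rule UnI1, rule orbit_self)
  next
    case (step a b)
    have a: "a \<in> ends D" and b: "b = lnk D a \<or> b = smooth S a" using Rel_cases step(2) by blast+
    show ?case
    proof (cases "a \<in> ?O")
      case aO: True
      have aH: "a \<in> H0" using aO OH by blast
      show ?thesis
      proof (cases "b = lnk D a")
        case True then show ?thesis using aO by blast
      next
        case False
        then have bs: "b = smooth S a" using b by simp
        obtain p where p: "p > 0" "(sig S ^^ p) a = a"
          using period[OF fin_H0 sig_H0 inj_sig aH] by blast
        let ?w = "(sig S ^^ (p - 1)) a"
        have "(sig S ^^ p) a = (sig S ^^ Suc (p - 1)) a" using p(1) by simp
        then have sw: "sig S ?w = a" using p(2) by simp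
        have "?w \<in> orbit (sig S) a" unfolding orbit_iff by blast
        moreover have "orbit (sig S) a \<subseteq> ?O" using aO by (rule orbit_trans)
        ultimately have wO: "?w \<in> ?O" by blast
        then have we: "?w \<in> ends D" using OH H0_ends by blast
        have "smooth S a = smooth S (smooth S (lnk D ?w))" using sw by (simp add: sig_def)
        also have "\<dots> = lnk D ?w" using smooth_smooth lnk_ends[OF we] by simp
        finally show ?thesis using bs wO by blast
      qed
    next
      case False
      then obtain z where z: "z \<in> ?O" "a = lnk D z" using step(3) by blast
      have ze: "z \<in> ends D" using z OH H0_ends by blast
      show ?thesis
      proof (cases "b = lnk D a")
        case True
        then have "b = z" using z lnk_lnk[OF ze] by simp
        then show ?thesis using z by blast
      next
        case False
        then have "b = sig S z" using b z by (simp add: sig_def)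
        moreover have "sig S z \<in> ?O" using orbit_trans[OF z(1)] in_orbit1[of "sig S" z] by blast
        ultimately show ?thesis by blast
      qed
    qed
  qed
qed

lemma class_H0: assumes xH: "x \<in> H0" shows "(Rel S)\<^sup>* `` {x} \<inter> H0 = orbit (sig S) x"
proof
  let ?O = "orbit (sig S) x"
  have OH: "?O \<subseteq> H0" using orbit_subset[OF sig_H0 xH] .
  have "lnk D ` ?O \<inter> H0 = {}"
  proof -
    have "lnk D z \<notin> H0" if "z \<in> ?O" for z
    proof -
      have "z \<in> H0" using that OH by blast
      then have "z \<in> ends D" "colored col z" using H0_iff by blast+
      then have "\<not> colored col (lnk D z)" using col_lnk by simp
      then show ?thesis using H0_iff by blast
    qed
    then show ?thesis by blast
  qed
  then show "(Rel S)\<^sup>* `` {x} \<inter> H0 \<subseteq> ?O" using class_in_U[OF xH] by blast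
  show "?O \<subseteq> (Rel S)\<^sup>* `` {x} \<inter> H0" using orbit_in_class[OF xH] OH by blast
qed

lemma card_classes: "card (ends D // (Rel S)\<^sup>*) = card (orbit (sig S) ` H0)"
proof -
  have rep: "\<exists>x\<in>H0. X = (Rel S)\<^sup>* `` {x}" if XQ: "X \<in> ends D // (Rel S)\<^sup>*" for X
  proof -
    obtain y where y: "X = (Rel S)\<^sup>* `` {y}" "y \<in> ends D" using XQ by (rule quotientE)
    show ?thesis
    proof (cases "colored col y")
      case True
      then have "y \<in> H0" using y H0_iff by blast
      then show ?thesis using y by blast
    next
      case False
      then have "colored col (lnk D y)" using col_lnk[OF y(2)] by simp
      then have lH: "lnk D y \<in> H0" using H0_iff lnk_ends[OF y(2)] by blast
      have "(y, lnk D y) \<in> (Rel S)\<^sup>*" using Rel_lnk[OF y(2)] by blast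
      then have "X = (Rel S)\<^sup>* `` {lnk D y}" using class_eq y(1) by simp
      then show ?thesis using lH by blast
    qed
  qed
  have "bij_betw (\<lambda>X. X \<inter> H0) (ends D // (Rel S)\<^sup>*) (orbit (sig S) ` H0)"
  proof (rule bij_betw_imageI)
    show "inj_on (\<lambda>X. X \<inter> H0) (ends D // (Rel S)\<^sup>*)"
    proof (rule inj_onI)
      fix X1 X2 assume X: "X1 \<in> ends D // (Rel S)\<^sup>*" "X2 \<in> ends D // (Rel S)\<^sup>*" "X1 \<inter> H0 = X2 \<inter> H0"
      obtain x1 where x1: "x1 \<in> H0" "X1 = (Rel S)\<^sup>* `` {x1}" using rep[OF X(1)] by blast
      obtain x2 where x2: "x2 \<in> H0" "X2 = (Rel S)\<^sup>* `` {x2}" using rep[OF X(2)] by blast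
      have "x2 \<in> X2 \<inter> H0" using x2 by simp
      then have "x2 \<in> X1 \<inter> H0" using X(3) by simp
      then have "x2 \<in> X1" by blast
      then have "(x1, x2) \<in> (Rel S)\<^sup>*" using x1 by simp
      then show "X1 = X2" using class_eq x1 x2 by simp
    qed
    show "(\<lambda>X. X \<inter> H0) ` (ends D // (Rel S)\<^sup>*) = orbit (sig S) ` H0"
    proof
      show "(\<lambda>X. X \<inter> H0) ` (ends D // (Rel S)\<^sup>*) \<subseteq> orbit (sig S) ` H0"
      proof
        fix P assume "P \<in> (\<lambda>X. X \<inter> H0) ` (ends D // (Rel S)\<^sup>*)"
        then obtain X where X: "X \<in> ends D // (Rel S)\<^sup>*" "P = X \<inter> H0" by blast
        obtain x where x: "x \<in> H0" "X = (Rel S)\<^sup>* `` {x}" using rep[OF X(1)] by blast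
        have "P = orbit (sig S) x" using X(2) x class_H0 by simp
        then show "P \<in> orbit (sig S) ` H0" using x(1) by blast
      qed
      show "orbit (sig S) ` H0 \<subseteq> (\<lambda>X. X \<inter> H0) ` (ends D // (Rel S)\<^sup>*)"
      proof
        fix P assume "P \<in> orbit (sig S) ` H0"
        then obtain x where x: "x \<in> H0" "P = orbit (sig S) x" by blast
        have mem: "(Rel S)\<^sup>* `` {x} \<in> ends D // (Rel S)\<^sup>*"
          using x(1) H0_ends by (intro quotientI) blast
        have eqP: "P = (\<lambda>X. X \<inter> H0) ((Rel S)\<^sup>* `` {x})" using class_H0[OF x(1)] x(2) by simp
        show "P \<in> (\<lambda>X. X \<inter> H0) ` (ends D // (Rel S)\<^sup>*)"
          by (rule image_eqI[where f="\<lambda>X. X \<inter> H0", OF eqP mem])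
      qed
    qed
  qed
  then show ?thesis by (rule bij_betw_same_card)
qed

end

lemma fr_id:
  assumes "finite H" "\<forall>y\<in>H. f y \<in> H" "inj_on f H" "K \<subseteq> H"
  shows "fr H K f id f"
  by (unfold_locales) (use assms in auto)

lemma IR_char:
  assumes "0 < i" "(g^^i) h \<in> K'" "\<forall>j. 0 < j \<and> j < i \<longrightarrow> (g^^j) h \<notin> K'"
  shows "induced_rot g K' h = (g^^i) h"
proof -
  have "(LEAST n. 0 < n \<and> (g^^n) h \<in> K') = i"
  proof (rule Least_equality)
    show "0 < i \<and> (g^^i) h \<in> K'" using assms by simp
    fix y assume "0 < y \<and> (g^^y) h \<in> K'"
    then show "i \<le> y" using assms(3) by (meson not_le)
  qed
  then show ?thesis unfolding induced_rot_def by simp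
qed

lemma walk:
  assumes fin: "finite H" and fH: "\<forall>y\<in>H. f y \<in> H" and inj: "inj_on f H" and KH: "K \<subseteq> H"
    and g: "\<forall>h\<in>K. g h = induced_rot f K h"
  shows "y \<in> K \<Longrightarrow> 0 < n \<Longrightarrow> (f^^n) y \<in> K \<Longrightarrow>
    \<exists>i>0. (g^^i) y = (f^^n) y \<and> (\<forall>j. 0 < j \<and> j < i \<longrightarrow> (\<exists>s. 0 < s \<and> s < n \<and> (g^^j) y = (f^^s) y))"
proof (induction n arbitrary: y rule: less_induct)
  case (less n)
  interpret FK: fr H K f id f using fr_id[OF fin fH inj KH] .
  let ?m = "FK.ret y"
  have m0: "0 < ?m" using FK.ret_pos less.prems(1) .
  have mn: "?m \<le> n"
  proof (rule ccontr)
    assume "\<not> ?m \<le> n"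
    then have "(f^^n) y \<notin> K" using FK.ret_min[OF less.prems(1) less.prems(2)] by simp
    then show False using less.prems(3) by simp
  qed
  have gy: "g y = (f^^?m) y" using g less.prems(1) FK.rho_ret by simp
  show ?case
  proof (cases "?m = n")
    case True
    have "(g^^1) y = (f^^n) y" using gy True by simp
    moreover have "\<forall>j. 0 < j \<and> j < (1::nat) \<longrightarrow> (\<exists>s. 0 < s \<and> s < n \<and> (g^^j) y = (f^^s) y)" by simp
    ultimately show ?thesis by (intro exI[of _ 1]) simp
  next
    case False
    then have mlt: "?m < n" using mn by simp
    let ?y' = "(f^^?m) y"
    have y'K: "?y' \<in> K" using FK.ret_in less.prems(1) .
    have pos: "0 < n - ?m" using mlt by simp
    have eqn: "(f^^(n - ?m)) ?y' = (f^^n) y"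
    proof -
      have "(f^^(n - ?m)) ?y' = (f^^((n - ?m) + ?m)) y" by (simp add: funpow_add)
      then show ?thesis using mlt by simp
    qed
    have "(f^^(n - ?m)) ?y' \<in> K" using eqn less.prems(3) by simp
    then obtain i' where i': "i' > 0" "(g^^i') ?y' = (f^^(n - ?m)) ?y'"
      "\<forall>j. 0 < j \<and> j < i' \<longrightarrow> (\<exists>s. 0 < s \<and> s < n - ?m \<and> (g^^j) ?y' = (f^^s) ?y')"
      using less.IH[of "n - ?m" ?y'] m0 less.prems(2) y'K pos by auto
    have gsuc: "(g^^Suc j) y = (g^^j) ?y'" for j
    proof -
      have "(g^^Suc j) y = (g^^j) (g y)" by (simp only: funpow_Suc_right comp_apply)
      then show ?thesis using gy by simp
    qed
    have "(g^^Suc i') y = (f^^n) y" using gsuc i'(2) eqn by simp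
    moreover have "\<forall>j. 0 < j \<and> j < Suc i' \<longrightarrow> (\<exists>s. 0 < s \<and> s < n \<and> (g^^j) y = (f^^s) y)"
    proof (intro allI impI)
      fix j assume j: "0 < j \<and> j < Suc i'"
      show "\<exists>s. 0 < s \<and> s < n \<and> (g^^j) y = (f^^s) y"
      proof (cases "j = 1")
        case True
        then show ?thesis using gy m0 mlt by (intro exI[of _ ?m]) simp
      next
        case False
        then obtain j' where j': "j = Suc j'" "0 < j'" "j' < i'" using j by (cases j) auto
        obtain s where s: "0 < s" "s < n - ?m" "(g^^j') ?y' = (f^^s) ?y'" using i'(3) j' by blast
        have "(g^^j) y = (f^^(s + ?m)) y" using gsuc j'(1) s(3) by (simp add: funpow_add)
        then show ?thesis using s by (intro exI[of _ "s + ?m"]) simp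
      qed
    qed
    ultimately show ?thesis by (intro exI[of _ "Suc i'"]) simp
  qed
qed

lemma nest:
  assumes fin: "finite H" and fH: "\<forall>y\<in>H. f y \<in> H" and inj: "inj_on f H" and KH: "K \<subseteq> H"
    and K'K: "K' \<subseteq> K" and g: "\<forall>h\<in>K. g h = induced_rot f K h" and h: "h \<in> K'"
  shows "induced_rot g K' h = induced_rot f K' h"
proof -
  interpret FK': fr H K' f id f using fr_id[OF fin fH inj] K'K KH by auto
  let ?m = "FK'.ret h"
  have m0: "0 < ?m" using FK'.ret_pos h .
  have mK': "(f^^?m) h \<in> K'" using FK'.ret_in h .
  have hK: "h \<in> K" using h K'K by blast
  obtain i where i: "i > 0" "(g^^i) h = (f^^?m) h"
    "\<forall>j. 0 < j \<and> j < i \<longrightarrow> (\<exists>s. 0 < s \<and> s < ?m \<and> (g^^j) h = (f^^s) h)"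
    using walk[OF fin fH inj KH g hK m0] mK' K'K by blast
  have "\<forall>j. 0 < j \<and> j < i \<longrightarrow> (g^^j) h \<notin> K'"
  proof (intro allI impI)
    fix j assume "0 < j \<and> j < i"
    then obtain s where s: "0 < s" "s < ?m" "(g^^j) h = (f^^s) h" using i(3) by blast
    then show "(g^^j) h \<notin> K'" using FK'.ret_min[OF h s(1) s(2)] by simp
  qed
  moreover have giK: "(g^^i) h \<in> K'" using i(2) mK' by simp
  ultimately have "induced_rot g K' h = (g^^i) h" using IR_char[OF i(1) giK] by blast
  also have "\<dots> = induced_rot f K' h" using i(2) FK'.rho_ret by simp
  finally show ?thesis .
qed

lemma pow_split:
  assumes "finite X" "c \<in> X"
  shows "(\<Sum>T\<in>Pow X. P T) = (\<Sum>T\<in>Pow (X - {c}). P T) + (\<Sum>T\<in>Pow (X - {c}). P (insert c T))"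
proof -
  have X: "X = insert c (X - {c})" using assms(2) by blast
  have pw: "Pow X = Pow (X - {c}) \<union> insert c ` Pow (X - {c})"
    by (subst X) (rule Pow_insert)
  have fin: "finite (Pow (X - {c}))" using assms(1) by simp
  have disj: "Pow (X - {c}) \<inter> insert c ` Pow (X - {c}) = {}" by blast
  have inj: "inj_on (insert c) (Pow (X - {c}))"
    by (rule inj_onI) blast
  have "(\<Sum>T\<in>Pow X. P T) = (\<Sum>T\<in>Pow (X - {c}). P T) + (\<Sum>T\<in>insert c ` Pow (X - {c}). P T)"
    unfolding pw by (rule sum.union_disjoint) (use fin disj in auto)
  also have "(\<Sum>T\<in>insert c ` Pow (X - {c}). P T) = (\<Sum>T\<in>Pow (X - {c}). P (insert c T))"
    by (rule sum.reindex[OF inj, unfolded comp_def])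
  finally show ?thesis .
qed

lemma prod_split1:
  fixes p q :: "'c \<Rightarrow> 'a::comm_monoid_mult"
  assumes "finite X" "c \<in> X" "T \<subseteq> X - {c}"
  shows "(\<Prod>c'\<in>X. if c' \<in> T then p c' else q c') = q c * (\<Prod>c'\<in>X - {c}. if c' \<in> T then p c' else q c')"
proof -
  have "c \<notin> T" using assms(3) by blast
  then show ?thesis using prod.remove[OF assms(1,2), of "\<lambda>c'. if c' \<in> T then p c' else q c'"] by simp
qed

lemma prod_split2:
  fixes p q :: "'c \<Rightarrow> 'a::comm_monoid_mult"
  assumes "finite X" "c \<in> X" "T \<subseteq> X - {c}"
  shows "(\<Prod>c'\<in>X. if c' \<in> insert c T then p c' else q c') = p c * (\<Prod>c'\<in>X - {c}. if c' \<in> T then p c' else q c')"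
proof -
  have "(\<Prod>c'\<in>X. if c' \<in> insert c T then p c' else q c') = p c * (\<Prod>c'\<in>X - {c}. if c' \<in> insert c T then p c' else q c')"
    using prod.remove[OF assms(1,2), of "\<lambda>c'. if c' \<in> insert c T then p c' else q c'"] by simp
  also have "(\<Prod>c'\<in>X - {c}. if c' \<in> insert c T then p c' else q c') = (\<Prod>c'\<in>X - {c}. if c' \<in> T then p c' else q c')"
    by (rule prod.cong) auto
  finally show ?thesis .
qed

context diag begin

definition bcK :: "('c \<times> nat) set \<Rightarrow> nat" where
  "bcK K = card (orbit (induced_rot f K \<circ> sw) ` K) + card {Q \<in> orbit f ` H0. Q \<inter> K = {}} + nloops D"

lemma fr_gen: assumes "K \<subseteq> H0" "\<forall>k\<in>K. sw k \<in> K"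
  shows "fr H0 K f sw (\<lambda>x. if f x \<in> K then sw (f x) else f x)"
proof
  show "\<forall>k\<in>K. sw (sw k) = k" using assms(1) H0_ends sw_sw by blast
qed (use assms fin_H0 fH0 inj_f0 in auto)

lemma tg_fields:
  "shalfs ((tait_graph D col)\<lparr>shalfs := K, srot := g\<rparr>) = K"
  "srot ((tait_graph D col)\<lparr>shalfs := K, srot := g\<rparr>) = g"
  "sopp ((tait_graph D col)\<lparr>shalfs := K, srot := g\<rparr>) = sw"
  "sverts ((tait_graph D col)\<lparr>shalfs := K, srot := g\<rparr>) = Inl ` (orbit f ` H0) \<union> Inr ` {..<nloops D}"
  "svert ((tait_graph D col)\<lparr>shalfs := K, srot := g\<rparr>) = (\<lambda>h. Inl (orbit f h))"
  "ssign ((tait_graph D col)\<lparr>shalfs := K, srot := g\<rparr>) = (\<lambda>(c, k). \<forall>j\<in>A_corners. colored col (c, j))"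
  by (simp_all add: tait_graph_def sw_def)

lemma verts_eq: assumes KH: "K \<subseteq> H0"
  shows "{v \<in> Inl ` (orbit f ` H0) \<union> Inr ` {..<nloops D}. \<forall>h\<in>K. Inl (orbit f h) \<noteq> v}
    = Inl ` {Q \<in> orbit f ` H0. Q \<inter> K = {}} \<union> Inr ` {..<nloops D}"
proof (rule set_eqI)
  fix v
  show "v \<in> {v \<in> Inl ` (orbit f ` H0) \<union> Inr ` {..<nloops D}. \<forall>h\<in>K. Inl (orbit f h) \<noteq> v}
    \<longleftrightarrow> v \<in> Inl ` {Q \<in> orbit f ` H0. Q \<inter> K = {}} \<union> Inr ` {..<nloops D}"
  proof (cases v)
    case (Inr n) then show ?thesis by auto
  next
    case (Inl Q)
    have "(Q \<in> orbit f ` H0 \<and> (\<forall>h\<in>K. orbit f h \<noteq> Q)) \<longleftrightarrow> (Q \<in> orbit f ` H0 \<and> Q \<inter> K = {})"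
    proof
      assume a: "Q \<in> orbit f ` H0 \<and> (\<forall>h\<in>K. orbit f h \<noteq> Q)"
      then obtain x where x: "x \<in> H0" "Q = orbit f x" by blast
      have "Q \<inter> K = {}"
      proof (rule ccontr)
        assume "Q \<inter> K \<noteq> {}"
        then obtain h where h: "h \<in> Q" "h \<in> K" by blast
        have "h \<in> orbit f x" using h x by simp
        then have "orbit f h = orbit f x" by (rule orbit_eq[OF fin_H0 fH0 inj_f0 x(1)])
        then show False using a h x by simp
      qed
      then show "Q \<in> orbit f ` H0 \<and> Q \<inter> K = {}" using a by simp
    next
      assume a: "Q \<in> orbit f ` H0 \<and> Q \<inter> K = {}"
      have "orbit f h \<noteq> Q" if "h \<in> K" for h
        using a that orbit_self[of h f] by blast
      then show "Q \<in> orbit f ` H0 \<and> (\<forall>h\<in>K. orbit f h \<noteq> Q)" using a by blast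
    qed
    then show ?thesis using Inl by auto
  qed
qed

lemma bc_Inv:
  assumes KH: "K \<subseteq> H0" and swK: "\<forall>k\<in>K. sw k \<in> K" and g: "\<forall>h\<in>K. g h = induced_rot f K h"
  shows "bc ((tait_graph D col)\<lparr>shalfs := K, srot := g\<rparr>) = bcK K"
proof -
  interpret FK: fr H0 K f sw "\<lambda>x. if f x \<in> K then sw (f x) else f x" using fr_gen[OF KH swK] .
  have rK: "\<forall>y\<in>K. induced_rot f K y \<in> K" using FK.rho_K by blast
  have o: "orbit (g \<circ> sw) ` K = orbit (induced_rot f K \<circ> sw) ` K"
  proof (rule image_cong[OF refl])
    fix x assume x: "x \<in> K"
    show "orbit (g \<circ> sw) x = orbit (induced_rot f K \<circ> sw) x"
      by (rule orbit_cong[of K]) (use swK rK g x in auto)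
  qed
  have finQ: "finite {Q \<in> orbit f ` H0. Q \<inter> K = {}}" using fin_H0 by simp
  have c2: "card (Inl ` {Q \<in> orbit f ` H0. Q \<inter> K = {}} \<union> Inr ` {..<nloops D})
      = card {Q \<in> orbit f ` H0. Q \<inter> K = {}} + nloops D"
  proof -
    have "card (Inl ` {Q \<in> orbit f ` H0. Q \<inter> K = {}} \<union> Inr ` {..<nloops D})
      = card (Inl ` {Q \<in> orbit f ` H0. Q \<inter> K = {}} :: (('c \<times> nat) set + nat) set) + card (Inr ` {..<nloops D} :: (('c \<times> nat) set + nat) set)"
      by (rule card_Un_disjoint) (use finQ in auto)
    also have "\<dots> = card {Q \<in> orbit f ` H0. Q \<inter> K = {}} + nloops D"
      by (simp add: card_image)
    finally show ?thesis .
  qed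
  show ?thesis
    unfolding bc_def tg_fields verts_eq[OF KH] o c2 bcK_def by simp
qed

lemma circles: "state_circles D S = bcK (hs (TS S))"
proof -
  let ?K = "hs (TS S)"
  interpret F: fr H0 ?K f sw "sig S" by (rule fr_inst)
  have rr: "F.r = sw \<circ> induced_rot f ?K" by (rule ext) (simp add: F.r_def)
  have "state_circles D S = card (orbit (sig S) ` H0) + nloops D"
    using state_circles_Rel card_classes by simp
  also have "\<dots> = card (orbit (sw \<circ> induced_rot f ?K) ` ?K) + card {Q \<in> orbit f ` H0. Q \<inter> ?K = {}} + nloops D"
    using F.count_orbits rr by simp
  also have "card (orbit (sw \<circ> induced_rot f ?K) ` ?K) = card (orbit (induced_rot f ?K \<circ> sw) ` ?K)"
    by (rule conj_orbits[symmetric]) (use F.rho_K sw_hs swsw_hs in auto)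
  finally show ?thesis unfolding bcK_def .
qed

end

context diag begin

lemma fin_hs: "finite (hs C)"
  using finite_subset[OF hs_H0 fin_H0] .

lemma hs_pair: assumes h: "h \<in> H0" shows "{x \<in> H0. fst x = fst h} = {h, sw h}"
proof
  obtain c k where ck: "h = (c, k)" by (cases h)
  have k: "k < 4" and colk: "(even k \<longleftrightarrow> col c)" using h ck H0_iff ends_iff colored_iff by auto
  show "{x \<in> H0. fst x = fst h} \<subseteq> {h, sw h}"
  proof
    fix x assume x: "x \<in> {x \<in> H0. fst x = fst h}"
    obtain c' k' where ck': "x = (c', k')" by (cases x)
    have k': "k' < 4" and colk': "(even k' \<longleftrightarrow> col c')" and cc: "c' = c"
      using x ck' ck H0_iff ends_iff colored_iff by auto
    have "k' = k \<or> k' = (k + 2) mod 4"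
      using mod4_cases[OF k] mod4_cases[OF k'] colk colk' cc by auto
    then show "x \<in> {h, sw h}" using ck ck' cc by (auto simp: sw_def)
  qed
  show "{h, sw h} \<subseteq> {x \<in> H0. fst x = fst h}" using h sw_H0 sw_fst by auto
qed

lemma hs_insert: assumes "h \<in> H0" shows "hs Cm \<union> {h, sw h} = hs (insert (fst h) Cm)"
  using hs_pair[OF assms] unfolding hs_def by auto

lemma hs_remove: assumes "h \<in> hs C" shows "hs C - {h, sw h} = hs (C - {fst h})"
proof -
  have hH: "h \<in> H0" using assms hs_H0 by blast
  show ?thesis using hs_pair[OF hH] assms unfolding hs_def by auto
qed

lemma half_at: assumes "c \<in> cross D" shows "(c, if col c then 0 else 1) \<in> H0"
  using assms by (simp add: H0_iff ends_iff colored_iff)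

lemma hs_sub_iff: assumes "C \<subseteq> cross D" shows "hs C \<subseteq> hs Cm \<longleftrightarrow> C \<subseteq> Cm"
proof
  assume a: "hs C \<subseteq> hs Cm"
  show "C \<subseteq> Cm"
  proof
    fix c assume c: "c \<in> C"
    have "(c, if col c then 0 else 1) \<in> H0" using half_at c assms by blast
    then have "(c, if col c then 0 else 1) \<in> hs C" using c unfolding hs_def by simp
    then show "c \<in> Cm" using a unfolding hs_def by auto
  qed
qed (auto simp: hs_def)

lemma hs_mono: "C' \<subseteq> C \<Longrightarrow> hs C' \<subseteq> hs C"
  unfolding hs_def by auto

lemma ssign_fst: "ssign ((tait_graph D col)\<lparr>shalfs := K, srot := g\<rparr>) h = col (fst h)"
  unfolding tg_fields by (cases h) (simp add: A_corners_def colored_iff)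

lemma delete_eq:
  "delete_edge ((tait_graph D col)\<lparr>shalfs := K, srot := g\<rparr>) h
   = (tait_graph D col)\<lparr>shalfs := K - {h, sw h}, srot := induced_rot g (K - {h, sw h})\<rparr>"
  unfolding delete_edge_def tg_fields by simp

lemma Fm_sum:
  fixes A B d :: "'a::field"
  shows "C \<subseteq> cross D \<Longrightarrow> Cm \<subseteq> C \<Longrightarrow> \<forall>h\<in>hs C. g h = induced_rot f (hs C) h \<Longrightarrow>
    Fm A B d ((tait_graph D col)\<lparr>shalfs := hs C, srot := g\<rparr>) (hs Cm) =
    (\<Sum>T\<in>Pow (C - Cm). (\<Prod>c\<in>C - Cm. if c \<in> T then (if col c then A else B) else (if col c then B else A))
        * d powi (int (bcK (hs (Cm \<union> T))) - 1))"
proof (induction "card (C - Cm)" arbitrary: C Cm g rule: less_induct)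
  case less
  let ?G = "(tait_graph D col)\<lparr>shalfs := hs C, srot := g\<rparr>"
  let ?p = "\<lambda>c. if col c then A else B"
  let ?q = "\<lambda>c. if col c then B else A"
  have finC: "finite C" using less.prems(1) fin_cross finite_subset by blast
  show ?case
  proof (cases "C \<subseteq> Cm")
    case True
    then have CCm: "C = Cm" using less.prems(2) by blast
    have "Fm A B d ?G (hs Cm) = d powi (int (bc ?G) - 1)"
      by (subst Fm.simps) (simp add: tg_fields CCm del: Fm.simps)
    also have "bc ?G = bcK (hs C)"
      by (rule bc_Inv) (use hs_H0 sw_hs less.prems(3) in auto)
    finally show ?thesis using CCm by simp
  next
    case False
    then have nsub: "\<not> hs C \<subseteq> hs Cm" using hs_sub_iff[OF less.prems(1)] by simp
    define h where "h = (SOME h. h \<in> hs C - hs Cm)"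
    have hm: "h \<in> hs C - hs Cm" unfolding h_def using nsub by (metis Diff_eq_empty_iff some_in_eq)
    define c where "c = fst h"
    have hH: "h \<in> H0" using hm hs_H0 by blast
    have cC: "c \<in> C - Cm" using hm hH unfolding c_def hs_def by auto
    have unf: "Fm A B d ?G (hs Cm) =
      (if ssign ?G h then B * Fm A B d (delete_edge ?G h) (hs Cm) + A * Fm A B d ?G (hs Cm \<union> {h, sopp ?G h})
       else A * Fm A B d (delete_edge ?G h) (hs Cm) + B * Fm A B d ?G (hs Cm \<union> {h, sopp ?G h}))"
    proof -
      have cnd: "(\<not> finite (shalfs ?G) \<or> shalfs ?G \<subseteq> hs Cm) = False"
        using nsub fin_hs by (simp add: tg_fields(1))
      have sh: "(SOME h. h \<in> shalfs ?G - hs Cm) = h" by (simp only: tg_fields(1) h_def)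
      show ?thesis
        by (rule trans[OF Fm.simps]) (simp only: cnd if_False sh Let_def)
    qed
    have sg: "ssign ?G h = col c" using ssign_fst c_def by simp
    have so: "sopp ?G h = sw h" using tg_fields by simp
    have ins: "hs Cm \<union> {h, sw h} = hs (insert c Cm)" using hs_insert[OF hH] c_def by simp
    have rem: "hs C - {h, sw h} = hs (C - {c})" using hs_remove hm c_def by blast
    have del: "delete_edge ?G h = (tait_graph D col)\<lparr>shalfs := hs (C - {c}), srot := induced_rot g (hs (C - {c}))\<rparr>"
      using delete_eq rem by simp
    let ?X = "C - Cm"
    have finX: "finite ?X" using finC by simp
    have X1: "(C - {c}) - Cm = ?X - {c}" by blast
    have X2: "C - insert c Cm = ?X - {c}" by blast
    have lt: "card (?X - {c}) < card ?X" using card_Diff1_less[OF finX cC] .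
    have IH1: "Fm A B d (delete_edge ?G h) (hs Cm) =
      (\<Sum>T\<in>Pow (?X - {c}). (\<Prod>c'\<in>?X - {c}. if c' \<in> T then ?p c' else ?q c') * d powi (int (bcK (hs (Cm \<union> T))) - 1))"
    proof -
      have g': "\<forall>h'\<in>hs (C - {c}). induced_rot g (hs (C - {c})) h' = induced_rot f (hs (C - {c})) h'"
        using nest[OF fin_H0 fH0 inj_f0 hs_H0 hs_mono[of "C - {c}" C] less.prems(3)] by blast
      have "Fm A B d ((tait_graph D col)\<lparr>shalfs := hs (C - {c}), srot := induced_rot g (hs (C - {c}))\<rparr>) (hs Cm) =
        (\<Sum>T\<in>Pow ((C - {c}) - Cm). (\<Prod>c'\<in>(C - {c}) - Cm. if c' \<in> T then ?p c' else ?q c') * d powi (int (bcK (hs (Cm \<union> T))) - 1))"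
        by (rule less.hyps) (use lt X1 less.prems cC g' in auto)
      then show ?thesis using del X1 by simp
    qed
    have IH2: "Fm A B d ?G (hs Cm \<union> {h, sopp ?G h}) =
      (\<Sum>T\<in>Pow (?X - {c}). (\<Prod>c'\<in>?X - {c}. if c' \<in> T then ?p c' else ?q c') * d powi (int (bcK (hs (Cm \<union> insert c T))) - 1))"
    proof -
      have "Fm A B d ?G (hs (insert c Cm)) =
        (\<Sum>T\<in>Pow (C - insert c Cm). (\<Prod>c'\<in>C - insert c Cm. if c' \<in> T then ?p c' else ?q c') * d powi (int (bcK (hs (insert c Cm \<union> T))) - 1))"
        by (rule less.hyps) (use lt X2 less.prems cC in auto)
      then show ?thesis using so ins X2 by simp
    qed
    let ?W = "\<lambda>T. (\<Prod>c'\<in>?X - {c}. if c' \<in> T then ?p c' else ?q c')"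
    have RHS: "(\<Sum>T\<in>Pow ?X. (\<Prod>c'\<in>?X. if c' \<in> T then ?p c' else ?q c') * d powi (int (bcK (hs (Cm \<union> T))) - 1))
      = ?q c * (\<Sum>T\<in>Pow (?X - {c}). ?W T * d powi (int (bcK (hs (Cm \<union> T))) - 1))
        + ?p c * (\<Sum>T\<in>Pow (?X - {c}). ?W T * d powi (int (bcK (hs (Cm \<union> insert c T))) - 1))"
    proof -
      have s1: "(\<Sum>T\<in>Pow (?X - {c}). (\<Prod>c'\<in>?X. if c' \<in> T then ?p c' else ?q c') * d powi (int (bcK (hs (Cm \<union> T))) - 1))
          = ?q c * (\<Sum>T\<in>Pow (?X - {c}). ?W T * d powi (int (bcK (hs (Cm \<union> T))) - 1))"
        unfolding sum_distrib_left
        by (rule sum.cong[OF refl]) (simp add: prod_split1[OF finX cC] mult.assoc)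
      have s2: "(\<Sum>T\<in>Pow (?X - {c}). (\<Prod>c'\<in>?X. if c' \<in> insert c T then ?p c' else ?q c') * d powi (int (bcK (hs (Cm \<union> insert c T))) - 1))
          = ?p c * (\<Sum>T\<in>Pow (?X - {c}). ?W T * d powi (int (bcK (hs (Cm \<union> insert c T))) - 1))"
        unfolding sum_distrib_left
        by (rule sum.cong[OF refl]) (subst prod_split2[OF finX cC], auto simp: mult.assoc)
      show ?thesis
        using pow_split[OF finX cC, of "\<lambda>T. (\<Prod>c'\<in>?X. if c' \<in> T then ?p c' else ?q c') * d powi (int (bcK (hs (Cm \<union> T))) - 1)"] s1 s2
        by simp
    qed
    show ?thesis
      unfolding unf sg IH1 IH2 RHS by simp
  qed
qed

end

theorem proposition4p4:
  fixes D :: "'c vdiag" and col :: "'c \<Rightarrow> bool" and A B d :: "'a::field"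
  assumes "virtual_link_diagram D"
    and "checkerboard D col"
  shows "bracket D A B d = F A B d (tait_graph D col)"
proof -
  interpret diag D col using assms by unfold_locales
  let ?T0 = "tait_graph D col"
  let ?p = "\<lambda>c. if col c then A else B"
  let ?q = "\<lambda>c. if col c then B else A"
  have hsall: "hs (cross D) = H0" unfolding hs_def using H0_ends ends_iff by auto
  have hs0: "hs {} = {}" unfolding hs_def by simp
  have g0: "\<forall>h\<in>hs (cross D). f h = induced_rot f (hs (cross D)) h"
  proof
    fix h assume "h \<in> hs (cross D)"
    then have hH: "h \<in> H0" using hsall by simp
    have "induced_rot f H0 h = (f^^1) h"
      by (rule IR_char) (use f_H0[OF hH] in auto)
    then show "f h = induced_rot f (hs (cross D)) h" using hsall by simp
  qed
  have T0eq: "?T0 = ?T0\<lparr>shalfs := hs (cross D), srot := f\<rparr>"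
    by (simp add: tait_graph_def hsall)
  have "F A B d ?T0 = Fm A B d ?T0 {}" unfolding F_def ..
  also have "\<dots> = Fm A B d (?T0\<lparr>shalfs := hs (cross D), srot := f\<rparr>) {}"
    by (rule arg_cong[where f="\<lambda>G. Fm A B d G {}", OF T0eq])
  also have "\<dots> = (\<Sum>T\<in>Pow (cross D). (\<Prod>c\<in>cross D. if c \<in> T then ?p c else ?q c) * d powi (int (bcK (hs T)) - 1))"
    using Fm_sum[of "cross D" "{}" f A B d] g0 hs0 by simp
  finally have Feq: "F A B d ?T0 = (\<Sum>T\<in>Pow (cross D). (\<Prod>c\<in>cross D. if c \<in> T then ?p c else ?q c) * d powi (int (bcK (hs T)) - 1))" .
  have TS_sub: "TS X \<in> Pow (cross D)" for X unfolding TS_def by auto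
  have TSTS: "TS (TS X) = X" if "X \<in> Pow (cross D)" for X
    using that unfolding TS_def by auto
  have trm: "(\<Prod>c\<in>cross D. if c \<in> TS S then ?p c else ?q c) * d powi (int (bcK (hs (TS S))) - 1)
      = A ^ card S * B ^ card (cross D - S) * d powi (int (state_circles D S) - 1)"
    if S: "S \<in> Pow (cross D)" for S
  proof -
    have "(\<Prod>c\<in>cross D. if c \<in> TS S then ?p c else ?q c) = (\<Prod>c\<in>cross D. if c \<in> S then A else B)"
      by (rule prod.cong[OF refl]) (auto simp: TS_def)
    also have "\<dots> = (\<Prod>c\<in>cross D \<inter> {x. x \<in> S}. A) * (\<Prod>c\<in>cross D \<inter> - {x. x \<in> S}. B)"
      by (rule prod.If_cases[OF fin_cross])
    also have "cross D \<inter> {x. x \<in> S} = S" using S by auto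
    also have "cross D \<inter> - {x. x \<in> S} = cross D - S" by auto
    finally have pr: "(\<Prod>c\<in>cross D. if c \<in> TS S then ?p c else ?q c) = A ^ card S * B ^ card (cross D - S)"
      by simp
    show ?thesis using pr circles[of S] by simp
  qed
  have "bracket D A B d = (\<Sum>S\<in>Pow (cross D). A ^ card S * B ^ card (cross D - S) * d powi (int (state_circles D S) - 1))"
    unfolding bracket_def ..
  also have "\<dots> = (\<Sum>T\<in>Pow (cross D). (\<Prod>c\<in>cross D. if c \<in> T then ?p c else ?q c) * d powi (int (bcK (hs T)) - 1))"
    by (rule sum.reindex_bij_witness[where i=TS and j=TS]) (use TSTS TS_sub trm in auto)
  finally show ?thesis using Feq by simp
qed


end
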